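(* Let $R=kQ/I$ be a string algebra with no DOZE, and suppose $Q$ has a band having at least one entering arrow $\beta$ and at least one exiting arrow $\alpha$. Then $(Q,I)$ has no double-zero.
   Context: A string algebra is $R=kQ/I$ with $I$ generated by paths, each vertex having at most two incoming and two outgoing arrows, and for each arrow $\alpha:x\to y$ at most one arrow $\beta$ from $y$ with $\alpha\beta\notin I$ and at most one arrow $\gamma$ into $x$ with $\gamma\alpha\notin I$ (paths composed left to right). A walk is a sequence of arrows and inverse arrows, reduced if no subwalk $\alpha\alpha^{-1}$ or $\alpha^{-1}\alpha$. A string is a reduced walk containing no zero-relation; a band is a cyclic string, not a power of another cyclic string, all of whose powers are strings. An arrow entering (resp. exiting) a band is an arrow not on the band whose target (resp. source) lies on the band. A double-zero is a reduced walk $\rho_1\nu\rho_2$ with $\rho_1,\rho_2$ zero-relations (paths in $I$) traversed along their arrows and $\nu$ a walk; a DOZE is a double-zero $\rho_1\omega_1\omega_2\omega_3\rho_2$ with $\omega_1,\omega_3$ walks and $\omega_2$ a band. *)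

theory Defs
  imports Main "HOL-Library.Sublist"
begin

(* A bound quiver (Q, I): vertices, arrows, source/target maps, and the set of
   paths generating the monomial ideal I.  Paths are lists of arrows composed
   left to right. *)
record ('v, 'a) bquiver =
  verts :: "'v set"
  arrs  :: "'a set"
  src   :: "'a \<Rightarrow> 'v"
  tgt   :: "'a \<Rightarrow> 'v"
  rels  :: "'a list set"

datatype 'a letter = Dir 'a | Inv 'a

fun arr_of :: "'a letter \<Rightarrow> 'a" where
  "arr_of (Dir a) = a" | "arr_of (Inv a) = a"

fun inv_letter :: "'a letter \<Rightarrow> 'a letter" where
  "inv_letter (Dir a) = Inv a" | "inv_letter (Inv a) = Dir a"

fun lsrc :: "('v, 'a, 'z) bquiver_scheme \<Rightarrow> 'a letter \<Rightarrow> 'v" where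
  "lsrc Q (Dir a) = src Q a" | "lsrc Q (Inv a) = tgt Q a"

fun ltgt :: "('v, 'a, 'z) bquiver_scheme \<Rightarrow> 'a letter \<Rightarrow> 'v" where
  "ltgt Q (Dir a) = tgt Q a" | "ltgt Q (Inv a) = src Q a"

definition inv_walk :: "'a letter list \<Rightarrow> 'a letter list" where
  "inv_walk w = rev (map inv_letter w)"

definition is_path :: "('v, 'a, 'z) bquiver_scheme \<Rightarrow> 'a list \<Rightarrow> bool" where
  "is_path Q p \<longleftrightarrow> p \<noteq> [] \<and> set p \<subseteq> arrs Q \<and>
     (\<forall>i. Suc i < length p \<longrightarrow> tgt Q (p ! i) = src Q (p ! Suc i))"

(* a path lies in the ideal I generated by the paths rels Q iff it contains
   one of the generating paths as a subpath *)
definition in_I :: "('v, 'a, 'z) bquiver_scheme \<Rightarrow> 'a list \<Rightarrow> bool" where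
  "in_I Q p \<longleftrightarrow> is_path Q p \<and> (\<exists>r \<in> rels Q. sublist r p)"

(* a walk: sequence of arrows and inverse arrows, consecutive letters composable
   (the empty list represents a trivial walk) *)
definition is_walk :: "('v, 'a, 'z) bquiver_scheme \<Rightarrow> 'a letter list \<Rightarrow> bool" where
  "is_walk Q w \<longleftrightarrow> arr_of ` set w \<subseteq> arrs Q \<and>
     (\<forall>i. Suc i < length w \<longrightarrow> ltgt Q (w ! i) = lsrc Q (w ! Suc i))"

definition reduced :: "'a letter list \<Rightarrow> bool" where
  "reduced w \<longleftrightarrow> (\<forall>i. Suc i < length w \<longrightarrow> w ! Suc i \<noteq> inv_letter (w ! i))"

definition contains_zero :: "('v, 'a, 'z) bquiver_scheme \<Rightarrow> 'a letter list \<Rightarrow> bool" where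
  "contains_zero Q w \<longleftrightarrow> (\<exists>p. in_I Q p \<and>
     (sublist (map Dir p) w \<or> sublist (inv_walk (map Dir p)) w))"

definition is_string :: "('v, 'a, 'z) bquiver_scheme \<Rightarrow> 'a letter list \<Rightarrow> bool" where
  "is_string Q w \<longleftrightarrow> is_walk Q w \<and> reduced w \<and> \<not> contains_zero Q w"

definition is_band :: "('v, 'a, 'z) bquiver_scheme \<Rightarrow> 'a letter list \<Rightarrow> bool" where
  "is_band Q b \<longleftrightarrow> b \<noteq> [] \<and> is_string Q b \<and> ltgt Q (last b) = lsrc Q (hd b) \<and>
     (\<forall>n\<ge>1. is_string Q (concat (replicate n b))) \<and>
     \<not> (\<exists>c k. k \<ge> 2 \<and> b = concat (replicate k c))"

definition band_vertices :: "('v, 'a, 'z) bquiver_scheme \<Rightarrow> 'a letter list \<Rightarrow> 'v set" where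
  "band_vertices Q b = lsrc Q ` set b"

definition entering_arrow :: "('v, 'a, 'z) bquiver_scheme \<Rightarrow> 'a letter list \<Rightarrow> 'a \<Rightarrow> bool" where
  "entering_arrow Q b \<beta> \<longleftrightarrow> \<beta> \<in> arrs Q \<and> \<beta> \<notin> arr_of ` set b \<and> tgt Q \<beta> \<in> band_vertices Q b"

definition exiting_arrow :: "('v, 'a, 'z) bquiver_scheme \<Rightarrow> 'a letter list \<Rightarrow> 'a \<Rightarrow> bool" where
  "exiting_arrow Q b \<alpha> \<longleftrightarrow> \<alpha> \<in> arrs Q \<and> \<alpha> \<notin> arr_of ` set b \<and> src Q \<alpha> \<in> band_vertices Q b"

definition is_double_zero :: "('v, 'a, 'z) bquiver_scheme \<Rightarrow> 'a letter list \<Rightarrow> bool" where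
  "is_double_zero Q w \<longleftrightarrow> is_walk Q w \<and> reduced w \<and>
     (\<exists>\<rho>1 \<nu> \<rho>2. in_I Q \<rho>1 \<and> in_I Q \<rho>2 \<and> w = map Dir \<rho>1 @ \<nu> @ map Dir \<rho>2)"

definition is_DOZE :: "('v, 'a, 'z) bquiver_scheme \<Rightarrow> 'a letter list \<Rightarrow> bool" where
  "is_DOZE Q w \<longleftrightarrow> is_walk Q w \<and> reduced w \<and>
     (\<exists>\<rho>1 \<omega>1 \<omega>2 \<omega>3 \<rho>2. in_I Q \<rho>1 \<and> in_I Q \<rho>2 \<and> is_band Q \<omega>2 \<and>
        w = map Dir \<rho>1 @ \<omega>1 @ \<omega>2 @ \<omega>3 @ map Dir \<rho>2)"

definition string_algebra :: "('v, 'a, 'z) bquiver_scheme \<Rightarrow> bool" where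
  "string_algebra Q \<longleftrightarrow>
     finite (verts Q) \<and> finite (arrs Q) \<and>
     (\<forall>a \<in> arrs Q. src Q a \<in> verts Q \<and> tgt Q a \<in> verts Q) \<and>
     (\<forall>r \<in> rels Q. is_path Q r \<and> length r \<ge> 2) \<and>
     (\<forall>x \<in> verts Q. card {a \<in> arrs Q. tgt Q a = x} \<le> 2 \<and> card {a \<in> arrs Q. src Q a = x} \<le> 2) \<and>
     (\<forall>\<alpha> \<in> arrs Q. card {\<beta> \<in> arrs Q. src Q \<beta> = tgt Q \<alpha> \<and> \<not> in_I Q [\<alpha>, \<beta>]} \<le> 1) \<and>
     (\<forall>\<alpha> \<in> arrs Q. card {\<gamma> \<in> arrs Q. tgt Q \<gamma> = src Q \<alpha> \<and> \<not> in_I Q [\<gamma>, \<alpha>]} \<le> 1)"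

definition connected_quiver :: "('v, 'a, 'z) bquiver_scheme \<Rightarrow> bool" where
  "connected_quiver Q \<longleftrightarrow> (\<forall>u \<in> verts Q. \<forall>v \<in> verts Q.
     (\<lambda>x y. \<exists>a \<in> arrs Q. (src Q a = x \<and> tgt Q a = y) \<or> (src Q a = y \<and> tgt Q a = x))\<^sup>*\<^sup>* u v)"

end

theory Submission
  imports Defs
begin

fun wft :: "('v,'a,'z) bquiver_scheme \<Rightarrow> 'v \<Rightarrow> 'a letter list \<Rightarrow> 'v \<Rightarrow> bool" where
  "wft Q u [] v = (u = v)"
| "wft Q u (l # w) v = (arr_of l \<in> arrs Q \<and> lsrc Q l = u \<and> wft Q (ltgt Q l) w v)"

lemma wft_append: "wft Q u (xs @ ys) v \<longleftrightarrow> (\<exists>m. wft Q u xs m \<and> wft Q m ys v)"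
  by (induction xs arbitrary: u) auto

lemma ltgt_inv[simp]: "ltgt Q (inv_letter l) = lsrc Q l" by (cases l) auto
lemma lsrc_inv[simp]: "lsrc Q (inv_letter l) = ltgt Q l" by (cases l) auto
lemma arr_inv[simp]: "arr_of (inv_letter l) = arr_of l" by (cases l) auto
lemma inv_inv[simp]: "inv_letter (inv_letter l) = l" by (cases l) auto
lemma inv_letter_eq_iff[simp]: "inv_letter a = inv_letter b \<longleftrightarrow> a = b"
  by (metis inv_inv)

lemma inv_walk_Nil[simp]: "inv_walk [] = []" by (simp add: inv_walk_def)
lemma inv_walk_Cons[simp]: "inv_walk (l # w) = inv_walk w @ [inv_letter l]" by (simp add: inv_walk_def)
lemma inv_walk_append[simp]: "inv_walk (xs @ ys) = inv_walk ys @ inv_walk xs" by (simp add: inv_walk_def)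
lemma inv_walk_inv[simp]: "inv_walk (inv_walk w) = w" by (simp add: inv_walk_def rev_map comp_def)
lemma inv_walk_Nil_iff[simp]: "inv_walk w = [] \<longleftrightarrow> w = []" by (simp add: inv_walk_def)
lemma length_inv_walk[simp]: "length (inv_walk w) = length w" by (simp add: inv_walk_def)
lemma set_inv_walk: "set (inv_walk w) = inv_letter ` set w" by (simp add: inv_walk_def)
lemma arrs_inv_walk[simp]: "arr_of ` set (inv_walk w) = arr_of ` set w"
  by (simp add: set_inv_walk image_image)
lemma hd_inv_walk: "w \<noteq> [] \<Longrightarrow> hd (inv_walk w) = inv_letter (last w)"
  by (simp add: inv_walk_def hd_rev last_map)
lemma last_inv_walk: "w \<noteq> [] \<Longrightarrow> last (inv_walk w) = inv_letter (hd w)"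
  by (simp add: inv_walk_def last_rev hd_map)

lemma wft_inv: "wft Q u w v \<Longrightarrow> wft Q v (inv_walk w) u"
  by (induction w arbitrary: u) (auto simp: wft_append)

lemma is_walk_Cons: "is_walk Q (a # w) \<longleftrightarrow> arr_of a \<in> arrs Q \<and> is_walk Q w \<and> (w \<noteq> [] \<longrightarrow> ltgt Q a = lsrc Q (hd w))"
proof -
  have "(\<forall>i. Suc i < length (a#w) \<longrightarrow> ltgt Q ((a#w) ! i) = lsrc Q ((a#w) ! Suc i)) \<longleftrightarrow>
        (w \<noteq> [] \<longrightarrow> ltgt Q a = lsrc Q (hd w)) \<and> (\<forall>i. Suc i < length w \<longrightarrow> ltgt Q (w ! i) = lsrc Q (w ! Suc i))"
    (is "?L \<longleftrightarrow> ?R")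
  proof
    assume L: ?L
    show ?R
    proof (intro conjI allI impI)
      assume "w \<noteq> []" then show "ltgt Q a = lsrc Q (hd w)" using L[rule_format, of 0] by (cases w) auto
    next
      fix i assume "Suc i < length w" then show "ltgt Q (w ! i) = lsrc Q (w ! Suc i)"
        using L[rule_format, of "Suc i"] by auto
    qed
  next
    assume R: ?R
    show ?L
    proof (intro allI impI)
      fix i assume i: "Suc i < length (a#w)"
      show "ltgt Q ((a#w) ! i) = lsrc Q ((a#w) ! Suc i)"
      proof (cases i)
        case 0 then show ?thesis using R i by (cases w) auto
      next
        case (Suc j) then show ?thesis using R i by auto
      qed
    qed
  qed
  then show ?thesis unfolding is_walk_def by auto
qed

lemma is_walk_Nil[simp]: "is_walk Q []" by (simp add: is_walk_def)

lemma wft_is_walk: "wft Q u w v \<Longrightarrow> is_walk Q w"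
  by (induction w arbitrary: u) (auto simp: is_walk_Cons neq_Nil_conv)

lemma is_walk_wft: "is_walk Q w \<Longrightarrow> w \<noteq> [] \<Longrightarrow> wft Q (lsrc Q (hd w)) w (ltgt Q (last w))"
proof (induction w)
  case (Cons a w) then show ?case by (cases w) (auto simp: is_walk_Cons)
qed simp

fun red :: "'a letter list \<Rightarrow> bool" where
  "red (x # y # zs) = (y \<noteq> inv_letter x \<and> red (y # zs))"
| "red _ = True"

lemma reduced_Cons: "reduced (a # w) \<longleftrightarrow> reduced w \<and> (w \<noteq> [] \<longrightarrow> hd w \<noteq> inv_letter a)"
proof -
  have "(\<forall>i. Suc i < length (a#w) \<longrightarrow> (a#w) ! Suc i \<noteq> inv_letter ((a#w) ! i)) \<longleftrightarrow>
        (w \<noteq> [] \<longrightarrow> hd w \<noteq> inv_letter a) \<and> (\<forall>i. Suc i < length w \<longrightarrow> w ! Suc i \<noteq> inv_letter (w ! i))"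
    (is "?L \<longleftrightarrow> ?R")
  proof
    assume L: ?L
    show ?R
    proof (intro conjI allI impI)
      assume "w \<noteq> []" then show "hd w \<noteq> inv_letter a" using L[rule_format, of 0] by (cases w) auto
    next
      fix i assume "Suc i < length w" then show "w ! Suc i \<noteq> inv_letter (w ! i)"
        using L[rule_format, of "Suc i"] by auto
    qed
  next
    assume R: ?R
    show ?L
    proof (intro allI impI)
      fix i assume i: "Suc i < length (a#w)"
      show "(a#w) ! Suc i \<noteq> inv_letter ((a#w) ! i)"
      proof (cases i)
        case 0 then show ?thesis using R i by (cases w) auto
      next
        case (Suc j) then show ?thesis using R i by auto
      qed
    qed
  qed
  then show ?thesis unfolding reduced_def by auto
qed

lemma reduced_red: "reduced w = red w"
proof (induction w rule: red.induct)
  case (1 x y zs) then show ?case by (auto simp: reduced_Cons)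
next
  case "2_1" then show ?case by (simp add: reduced_def)
next
  case ("2_2" v) then show ?case by (simp add: reduced_def)
qed

lemma red_Cons: "red (a # w) \<longleftrightarrow> red w \<and> (w \<noteq> [] \<longrightarrow> hd w \<noteq> inv_letter a)"
  by (cases w) auto

lemma red_append: "red (xs @ ys) \<longleftrightarrow> red xs \<and> red ys \<and> (xs \<noteq> [] \<longrightarrow> ys \<noteq> [] \<longrightarrow> hd ys \<noteq> inv_letter (last xs))"
  by (induction xs) (auto simp: red_Cons)

lemma red_app_arr: "red xs \<Longrightarrow> red ys \<Longrightarrow> (xs \<noteq> [] \<Longrightarrow> ys \<noteq> [] \<Longrightarrow> arr_of (last xs) \<noteq> arr_of (hd ys)) \<Longrightarrow> red (xs @ ys)"
  unfolding red_append by (metis arr_inv)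

lemma red_inv: "red (inv_walk w) = red w"
  by (induction w) (auto simp: red_append red_Cons hd_inv_walk last_inv_walk)

lemma not_red_split: "\<not> red w \<Longrightarrow> \<exists>xs l ys. w = xs @ l # inv_letter l # ys"
proof (induction w rule: red.induct)
  case (1 x y zs)
  show ?case
  proof (cases "y = inv_letter x")
    case True then show ?thesis by (rule_tac x="[]" in exI) auto
  next
    case False
    with 1 obtain xs l ys where "y # zs = xs @ l # inv_letter l # ys" by auto
    then show ?thesis by (rule_tac x="x # xs" in exI) auto
  qed
qed auto

lemma red_infix: "red (xs @ ys @ zs) \<Longrightarrow> red ys"
  by (simp add: red_append)

definition vtx :: "('v,'a,'z) bquiver_scheme \<Rightarrow> 'v \<Rightarrow> 'a letter list \<Rightarrow> nat \<Rightarrow> 'v" where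
  "vtx Q u w p = (u # map (ltgt Q) w) ! p"

lemma vtx_0[simp]: "vtx Q u w 0 = u" by (simp add: vtx_def)
lemma vtx_Suc: "p < length w \<Longrightarrow> vtx Q u w (Suc p) = ltgt Q (w ! p)" by (simp add: vtx_def)

lemma wft_take_drop_vtx: "wft Q u w v \<Longrightarrow> p \<le> length w \<Longrightarrow>
   wft Q u (take p w) (vtx Q u w p) \<and> wft Q (vtx Q u w p) (drop p w) v"
proof (induction w arbitrary: u p)
  case (Cons l w)
  show ?case
  proof (cases p)
    case 0 then show ?thesis using Cons by simp
  next
    case (Suc q)
    have "vtx Q u (l # w) p = vtx Q (ltgt Q l) w q" by (simp add: vtx_def Suc)
    then show ?thesis using Cons.IH[of "ltgt Q l" q] Cons.prems Suc by auto
  qed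
qed simp

lemma vtx_lsrc: "wft Q u w v \<Longrightarrow> p < length w \<Longrightarrow> lsrc Q (w ! p) = vtx Q u w p"
proof (induction w arbitrary: u p)
  case (Cons l w)
  then show ?case by (cases p) (auto simp: vtx_def)
qed simp

lemma vtx_len: "wft Q u w v \<Longrightarrow> vtx Q u w (length w) = v"
  using wft_take_drop_vtx[of Q u w v "length w"] by simp

lemma vtx_drop: "i \<le> length w \<Longrightarrow> vtx Q (vtx Q u w i) (drop i w) q = vtx Q u w (i + q)"
  by (cases q) (auto simp: vtx_def drop_map[symmetric] nth_drop)

lemma endpoints: "{src Q (arr_of l), tgt Q (arr_of l)} = {lsrc Q l, ltgt Q l}"
  by (cases l) auto

lemma wft_nth_split: "wft Q u w v \<Longrightarrow> k < length w \<Longrightarrow>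
   wft Q u (take k w) (lsrc Q (w ! k)) \<and> wft Q (lsrc Q (w ! k)) (drop k w) v"
  using wft_take_drop_vtx[of Q u w v k] vtx_lsrc[of Q u w v k] by auto

lemma wft_arrs: "wft Q u w v \<Longrightarrow> arr_of ` set w \<subseteq> arrs Q"
  by (induction w arbitrary: u) auto

lemma wft_hd: "wft Q u w v \<Longrightarrow> w \<noteq> [] \<Longrightarrow> lsrc Q (hd w) = u"
  by (cases w) auto

lemma wft_last: "wft Q u w v \<Longrightarrow> w \<noteq> [] \<Longrightarrow> ltgt Q (last w) = v"
  by (induction w arbitrary: u) (auto simp: neq_Nil_conv)

lemma wft_vsets: "wft Q u w v \<Longrightarrow> insert u (ltgt Q ` set w) = insert v (lsrc Q ` set w)"
  by (induction w arbitrary: u) auto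

lemma closed_vsets: "wft Q u w u \<Longrightarrow> w \<noteq> [] \<Longrightarrow> ltgt Q ` set w = lsrc Q ` set w"
proof -
  assume a: "wft Q u w u" "w \<noteq> []"
  have "u \<in> lsrc Q ` set w" using a wft_hd[OF a] by (metis hd_in_set image_eqI)
  moreover have "u \<in> ltgt Q ` set w" using a wft_last[OF a] by (metis last_in_set image_eqI)
  ultimately show ?thesis using wft_vsets[OF a(1)] by (metis insert_absorb)
qed

lemma concat_replicate_inv: "concat (replicate n (inv_walk b)) = inv_walk (concat (replicate n b))"
proof (induction n)
  case (Suc n)
  have h: "concat (replicate m x) @ x = x @ concat (replicate m x)" for m and x :: "'b list"
    by (induction m) auto
  have "concat (replicate (Suc n) b) = concat (replicate n b) @ b" using h[of n b] by simp
  then show ?case using Suc h[of n "inv_walk b"] by simp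
qed simp

lemma sublist_inv: "sublist xs ys \<Longrightarrow> sublist (inv_walk xs) (inv_walk ys)"
proof -
  assume "sublist xs ys"
  then obtain ps ss where "ys = ps @ xs @ ss" unfolding sublist_def by blast
  then have "inv_walk ys = inv_walk ss @ inv_walk xs @ inv_walk ps" by simp
  then show ?thesis unfolding sublist_def by blast
qed

lemma sublist_inv_iff: "sublist xs (inv_walk ys) \<longleftrightarrow> sublist (inv_walk xs) ys"
  using sublist_inv[of xs "inv_walk ys"] sublist_inv[of "inv_walk xs" ys] by auto

lemma contains_zero_inv: "contains_zero Q (inv_walk w) \<longleftrightarrow> contains_zero Q w"
proof -
  have "sublist (map Dir p) (inv_walk w) \<or> sublist (inv_walk (map Dir p)) (inv_walk w) \<longleftrightarrow>
        sublist (map Dir p) w \<or> sublist (inv_walk (map Dir p)) w" for p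
    using sublist_inv_iff[of "map Dir p" w] sublist_inv_iff[of "inv_walk (map Dir p)" w] by auto
  then show ?thesis unfolding contains_zero_def by blast
qed

lemma is_walk_inv: "is_walk Q (inv_walk w) \<longleftrightarrow> is_walk Q w"
proof -
  have *: "is_walk Q w \<Longrightarrow> is_walk Q (inv_walk w)" for w
  proof (cases "w = []")
    case False
    assume "is_walk Q w"
    from is_walk_wft[OF this False] have "wft Q (ltgt Q (last w)) (inv_walk w) (lsrc Q (hd w))" by (rule wft_inv)
    then show ?thesis by (rule wft_is_walk)
  qed simp
  show ?thesis using *[of w] *[of "inv_walk w"] by auto
qed

lemma is_string_inv: "is_string Q (inv_walk w) \<longleftrightarrow> is_string Q w"
  unfolding is_string_def by (simp add: is_walk_inv contains_zero_inv reduced_red red_inv)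

lemma band_inv: "is_band Q b \<Longrightarrow> is_band Q (inv_walk b)"
  unfolding is_band_def
proof (elim conjE, intro conjI allI impI)
  assume b: "b \<noteq> []" "is_string Q b" "ltgt Q (last b) = lsrc Q (hd b)"
    "\<forall>n\<ge>1. is_string Q (concat (replicate n b))" "\<not> (\<exists>c k. k \<ge> 2 \<and> b = concat (replicate k c))"
  show "inv_walk b \<noteq> []" using b by simp
  show "is_string Q (inv_walk b)" using b by (simp add: is_string_inv)
  show "ltgt Q (last (inv_walk b)) = lsrc Q (hd (inv_walk b))" using b by (simp add: hd_inv_walk last_inv_walk)
  fix n :: nat assume "n \<ge> 1"
  then show "is_string Q (concat (replicate n (inv_walk b)))" using b by (simp add: concat_replicate_inv is_string_inv)
next
  assume b: "\<not> (\<exists>c k. k \<ge> 2 \<and> b = concat (replicate k c))"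
  show "\<not> (\<exists>c k. k \<ge> 2 \<and> inv_walk b = concat (replicate k c))"
  proof
    assume "\<exists>c k. k \<ge> 2 \<and> inv_walk b = concat (replicate k c)"
    then obtain c k where "k \<ge> 2" "inv_walk b = concat (replicate k c)" by blast
    then have "b = concat (replicate k (inv_walk c))" by (metis concat_replicate_inv inv_walk_inv)
    with b \<open>k \<ge> 2\<close> show False by blast
  qed
qed

lemma band_closed: "is_band Q b \<Longrightarrow> wft Q (lsrc Q (hd b)) b (lsrc Q (hd b))"
  unfolding is_band_def is_string_def by (metis is_walk_wft)

lemma band_pow_red: "is_band Q b \<Longrightarrow> red (concat (replicate n b))"
proof (cases "n = 0")
  case False
  assume "is_band Q b"
  then show ?thesis using False unfolding is_band_def is_string_def reduced_red by auto
qed simp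

lemma band_pow_string: "is_band Q b \<Longrightarrow> n \<ge> 1 \<Longrightarrow> is_string Q (concat (replicate n b))"
  unfolding is_band_def by auto

lemma band_red3: "is_band Q b \<Longrightarrow> red (b @ b @ b)"
  using band_pow_red[of Q b 3] by (simp add: numeral_3_eq_3)

lemma band_red5: "is_band Q b \<Longrightarrow> red (b @ b @ b @ b @ b)"
  using band_pow_red[of Q b 5] by (simp add: eval_nat_numeral)

lemma band_vertices_inv: "is_band Q b \<Longrightarrow> band_vertices Q (inv_walk b) = band_vertices Q b"
proof -
  assume "is_band Q b"
  then have "wft Q (lsrc Q (hd b)) b (lsrc Q (hd b))" "b \<noteq> []" using band_closed is_band_def by auto
  then have "ltgt Q ` set b = lsrc Q ` set b" by (rule closed_vsets)
  then show ?thesis by (simp add: band_vertices_def set_inv_walk image_image)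
qed

lemma band_arr_ends: "is_band Q b \<Longrightarrow> arr_of l \<in> arr_of ` set b \<Longrightarrow>
    lsrc Q l \<in> band_vertices Q b \<and> ltgt Q l \<in> band_vertices Q b"
proof -
  assume bb: "is_band Q b" and l: "arr_of l \<in> arr_of ` set b"
  then have "wft Q (lsrc Q (hd b)) b (lsrc Q (hd b))" "b \<noteq> []" using band_closed is_band_def by auto
  then have ev: "ltgt Q ` set b = lsrc Q ` set b" by (rule closed_vsets)
  from l obtain l' where l': "l' \<in> set b" "arr_of l' = arr_of l" by auto
  have "{lsrc Q l, ltgt Q l} = {lsrc Q l', ltgt Q l'}" using endpoints[of Q l] endpoints[of Q l'] l' by simp
  moreover have "lsrc Q l' \<in> band_vertices Q b" "ltgt Q l' \<in> band_vertices Q b"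
    using l'(1) ev unfolding band_vertices_def by (blast, metis image_eqI)
  ultimately show ?thesis by (metis insertCI insert_iff singletonD)
qed

lemma sublist_consec: "Suc m < length xs \<Longrightarrow> sublist [xs ! m, xs ! Suc m] xs"
proof -
  assume a: "Suc m < length xs"
  have "drop m xs = xs ! m # xs ! Suc m # drop (Suc (Suc m)) xs"
    using a by (metis Cons_nth_drop_Suc Suc_lessD)
  then have "xs = take m xs @ [xs ! m, xs ! Suc m] @ drop (Suc (Suc m)) xs"
    by (metis append_take_drop_id append_Cons append_Nil)
  then show ?thesis by (metis sublist_appendI)
qed

lemma band_pair: "is_band Q b \<Longrightarrow> k < length b \<Longrightarrow>
  \<exists>P. P \<in> set b \<and> ltgt Q P = lsrc Q (b ! k) \<and> b ! k \<noteq> inv_letter P \<and> sublist [P, b ! k] (b @ b)"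
proof -
  assume bb: "is_band Q b" and k: "k < length b"
  define m where "m = k + length b - 1"
  have len: "length b > 0" using k by linarith
  have sm: "Suc m = k + length b" using len m_def by simp
  have sml: "Suc m < length (b @ b)" using sm k by simp
  have nSm: "(b @ b) ! Suc m = b ! k" using sm by (simp add: nth_append)
  have Pin: "(b @ b) ! m \<in> set b" using sml by (metis Suc_lessD nth_mem set_append Un_iff)
  have red2: "red (b @ b)" using band_pow_red[OF bb, of 2] by (simp add: numeral_2_eq_2)
  then have ne: "(b @ b) ! Suc m \<noteq> inv_letter ((b @ b) ! m)"
    using sml unfolding reduced_red[symmetric] reduced_def by blast
  have cl: "wft Q (lsrc Q (hd b)) b (lsrc Q (hd b))" by (rule band_closed[OF bb])
  then have w2: "wft Q (lsrc Q (hd b)) (b @ b) (lsrc Q (hd b))" by (auto simp: wft_append)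
  have "lsrc Q ((b @ b) ! Suc m) = vtx Q (lsrc Q (hd b)) (b @ b) (Suc m)" by (rule vtx_lsrc[OF w2 sml])
  also have "\<dots> = ltgt Q ((b @ b) ! m)" using sml by (simp add: vtx_Suc)
  finally have e1: "ltgt Q ((b @ b) ! m) = lsrc Q (b ! k)" using nSm by simp
  have e2: "sublist [(b @ b) ! m, b ! k] (b @ b)" using sublist_consec[OF sml] nSm by simp
  show ?thesis using Pin nSm ne e1 e2 by metis
qed

lemma band_no_zero2: "is_band Q b \<Longrightarrow> \<not> contains_zero Q (b @ b)"
  using band_pow_string[of Q b 2] unfolding is_string_def by (simp add: numeral_2_eq_2)

lemma band_pair_notI: "is_band Q b \<Longrightarrow> sublist [Dir x, Dir y] (b @ b) \<Longrightarrow> \<not> in_I Q [x, y]"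
proof
  assume "is_band Q b" "sublist [Dir x, Dir y] (b @ b)" "in_I Q [x, y]"
  then have "contains_zero Q (b @ b)" unfolding contains_zero_def by (intro exI[of _ "[x,y]"]) simp
  then show False using band_no_zero2 \<open>is_band Q b\<close> by blast
qed

lemma band_pair_notI_inv: "is_band Q b \<Longrightarrow> sublist [Inv y, Inv x] (b @ b) \<Longrightarrow> \<not> in_I Q [x, y]"
proof
  assume "is_band Q b" "sublist [Inv y, Inv x] (b @ b)" "in_I Q [x, y]"
  then have "contains_zero Q (b @ b)" unfolding contains_zero_def by (intro exI[of _ "[x,y]"]) (simp add: inv_walk_def)
  then show False using band_no_zero2 \<open>is_band Q b\<close> by blast
qed

lemma card1_contra: "finite A \<Longrightarrow> card A \<le> 1 \<Longrightarrow> x \<in> A \<Longrightarrow> y \<in> A \<Longrightarrow> x \<noteq> y \<Longrightarrow> False"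
  by (metis One_nat_def card_le_Suc0_iff_eq)

lemma card2_contra: "finite A \<Longrightarrow> card A \<le> 2 \<Longrightarrow> x \<in> A \<Longrightarrow> y \<in> A \<Longrightarrow> z \<in> A \<Longrightarrow> x \<noteq> y \<Longrightarrow> x \<noteq> z \<Longrightarrow> y \<noteq> z \<Longrightarrow> False"
proof -
  assume a: "finite A" "card A \<le> 2" "x \<in> A" "y \<in> A" "z \<in> A" "x \<noteq> y" "x \<noteq> z" "y \<noteq> z"
  then have "card {x, y, z} \<le> card A" by (intro card_mono) auto
  moreover have "card {x, y, z} = 3" using a by simp
  ultimately show False using a by simp
qed

lemma SA_facts:
  assumes "string_algebra Q"
  shows "finite (arrs Q)"
    and "\<And>a. a \<in> arrs Q \<Longrightarrow> src Q a \<in> verts Q \<and> tgt Q a \<in> verts Q"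
    and "\<And>x. x \<in> verts Q \<Longrightarrow> card {a \<in> arrs Q. tgt Q a = x} \<le> 2"
    and "\<And>x. x \<in> verts Q \<Longrightarrow> card {a \<in> arrs Q. src Q a = x} \<le> 2"
    and "\<And>a. a \<in> arrs Q \<Longrightarrow> card {b \<in> arrs Q. src Q b = tgt Q a \<and> \<not> in_I Q [a, b]} \<le> 1"
    and "\<And>a. a \<in> arrs Q \<Longrightarrow> card {c \<in> arrs Q. tgt Q c = src Q a \<and> \<not> in_I Q [c, a]} \<le> 1"
  using assms unfolding string_algebra_def by auto

lemma band_arrs: "is_band Q b \<Longrightarrow> arr_of ` set b \<subseteq> arrs Q"
  using band_closed wft_arrs by metis

lemma port_in:
  assumes SA: "string_algebra Q" and bb: "is_band Q b" and en: "entering_arrow Q b \<beta>"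
  shows "\<exists>oo. oo \<in> arr_of ` set b \<and> in_I Q [\<beta>, oo]"
proof -
  have barr: "\<beta> \<in> arrs Q" "\<beta> \<notin> arr_of ` set b" "tgt Q \<beta> \<in> lsrc Q ` set b"
    using en unfolding entering_arrow_def band_vertices_def by auto
  then obtain k where k: "k < length b" "lsrc Q (b ! k) = tgt Q \<beta>" by (metis imageE in_set_conv_nth)
  obtain P where P: "P \<in> set b" "ltgt Q P = lsrc Q (b ! k)" "b ! k \<noteq> inv_letter P" "sublist [P, b ! k] (b @ b)"
    using band_pair[OF bb k(1)] by blast
  define N where "N = b ! k"
  have Nin: "N \<in> set b" using k N_def by simp
  have fin: "finite (arrs Q)" using SA_facts(1)[OF SA] .
  have ba: "arr_of ` set b \<subseteq> arrs Q" by (rule band_arrs[OF bb])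
  have vb: "tgt Q \<beta> \<in> verts Q" using SA_facts(2)[OF SA barr(1)] by simp
  show ?thesis
  proof (cases N)
    case (Dir o1)
    note N1 = this
    have o1: "o1 \<in> arr_of ` set b" "src Q o1 = tgt Q \<beta>" using Nin N1 k N_def by (metis arr_of.simps(1) image_eqI, simp)
    show ?thesis
    proof (cases P)
      case (Dir i1)
      have i1: "i1 \<in> arr_of ` set b" "tgt Q i1 = tgt Q \<beta>" using P Dir k by (metis arr_of.simps(1) image_eqI, simp)
      have ni: "\<not> in_I Q [i1, o1]" using band_pair_notI[OF bb] P(4) Dir N1 N_def by simp
      show ?thesis
      proof (rule ccontr)
        assume "\<not> ?thesis"
        then have "\<not> in_I Q [\<beta>, o1]" using o1 by blast
        then show False
          using card1_contra[OF _ SA_facts(6)[OF SA, of o1], of i1 \<beta>] fin ni i1 o1 barr ba by auto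
      qed
    next
      case (Inv o2)
      have o2: "o2 \<in> arr_of ` set b" "src Q o2 = tgt Q \<beta>" using P Inv k by (metis arr_of.simps(2) image_eqI, simp)
      have ne: "o1 \<noteq> o2" using P(3) Inv N1 N_def by auto
      show ?thesis
      proof (rule ccontr)
        assume "\<not> ?thesis"
        then have "\<not> in_I Q [\<beta>, o1]" "\<not> in_I Q [\<beta>, o2]" using o1 o2 by blast+
        then show False
          using card1_contra[OF _ SA_facts(5)[OF SA barr(1)], of o1 o2] fin ne o1 o2 ba by auto
      qed
    qed
  next
    case (Inv i1)
    note N1 = this
    have i1: "i1 \<in> arr_of ` set b" "tgt Q i1 = tgt Q \<beta>" using Nin N1 k N_def by (metis arr_of.simps(2) image_eqI, simp)
    show ?thesis
    proof (cases P)
      case (Dir i2)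
      have i2: "i2 \<in> arr_of ` set b" "tgt Q i2 = tgt Q \<beta>" using P Dir k by (metis arr_of.simps(1) image_eqI, simp)
      have ne: "i1 \<noteq> i2" using P(3) Dir N1 N_def by auto
      show ?thesis
        using card2_contra[OF _ SA_facts(3)[OF SA vb], of i1 i2 \<beta>] fin ne i1 i2 barr ba by auto
    next
      case (Inv o2)
      have o2: "o2 \<in> arr_of ` set b" "src Q o2 = tgt Q \<beta>" using P Inv k by (metis arr_of.simps(2) image_eqI, simp)
      have ni: "\<not> in_I Q [i1, o2]" using band_pair_notI_inv[OF bb] P(4) Inv N1 N_def by simp
      show ?thesis
      proof (rule ccontr)
        assume "\<not> ?thesis"
        then have "\<not> in_I Q [\<beta>, o2]" using o2 by blast
        then show False
          using card1_contra[OF _ SA_facts(6)[OF SA, of o2], of i1 \<beta>] fin ni i1 o2 barr ba by auto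
      qed
    qed
  qed
qed

lemma port_out:
  assumes SA: "string_algebra Q" and bb: "is_band Q b" and ex: "exiting_arrow Q b \<alpha>"
  shows "\<exists>i. i \<in> arr_of ` set b \<and> in_I Q [i, \<alpha>]"
proof -
  have barr: "\<alpha> \<in> arrs Q" "\<alpha> \<notin> arr_of ` set b" "src Q \<alpha> \<in> lsrc Q ` set b"
    using ex unfolding exiting_arrow_def band_vertices_def by auto
  then obtain k where k: "k < length b" "lsrc Q (b ! k) = src Q \<alpha>" by (metis imageE in_set_conv_nth)
  obtain P where P: "P \<in> set b" "ltgt Q P = lsrc Q (b ! k)" "b ! k \<noteq> inv_letter P" "sublist [P, b ! k] (b @ b)"
    using band_pair[OF bb k(1)] by blast
  define N where "N = b ! k"
  have Nin: "N \<in> set b" using k N_def by simp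
  have fin: "finite (arrs Q)" using SA_facts(1)[OF SA] .
  have ba: "arr_of ` set b \<subseteq> arrs Q" by (rule band_arrs[OF bb])
  have vb: "src Q \<alpha> \<in> verts Q" using SA_facts(2)[OF SA barr(1)] by simp
  show ?thesis
  proof (cases P)
    case (Dir i1)
    note P1 = this
    have i1: "i1 \<in> arr_of ` set b" "tgt Q i1 = src Q \<alpha>" using P P1 k by (metis arr_of.simps(1) image_eqI, simp)
    show ?thesis
    proof (cases N)
      case (Dir o1)
      have o1: "o1 \<in> arr_of ` set b" "src Q o1 = src Q \<alpha>" using Nin Dir k N_def by (metis arr_of.simps(1) image_eqI, simp)
      have ni: "\<not> in_I Q [i1, o1]" using band_pair_notI[OF bb] P(4) Dir P1 N_def by simp
      show ?thesis
      proof (rule ccontr)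
        assume "\<not> ?thesis"
        then have "\<not> in_I Q [i1, \<alpha>]" using i1 by blast
        then show False
          using card1_contra[OF _ SA_facts(5)[OF SA, of i1], of o1 \<alpha>] fin ni i1 o1 barr ba by auto
      qed
    next
      case (Inv i2)
      have i2: "i2 \<in> arr_of ` set b" "tgt Q i2 = src Q \<alpha>" using Nin Inv k N_def by (metis arr_of.simps(2) image_eqI, simp)
      have ne: "i1 \<noteq> i2" using P(3) Inv P1 N_def by auto
      show ?thesis
      proof (rule ccontr)
        assume "\<not> ?thesis"
        then have "\<not> in_I Q [i1, \<alpha>]" "\<not> in_I Q [i2, \<alpha>]" using i1 i2 by blast+
        then show False
          using card1_contra[OF _ SA_facts(6)[OF SA barr(1)], of i1 i2] fin ne i1 i2 ba by auto
      qed
    qed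
  next
    case (Inv o2)
    note P1 = this
    have o2: "o2 \<in> arr_of ` set b" "src Q o2 = src Q \<alpha>" using P P1 k by (metis arr_of.simps(2) image_eqI, simp)
    show ?thesis
    proof (cases N)
      case (Dir o1)
      have o1: "o1 \<in> arr_of ` set b" "src Q o1 = src Q \<alpha>" using Nin Dir k N_def by (metis arr_of.simps(1) image_eqI, simp)
      have ne: "o1 \<noteq> o2" using P(3) Dir P1 N_def by auto
      show ?thesis
        using card2_contra[OF _ SA_facts(4)[OF SA vb], of o1 o2 \<alpha>] fin ne o1 o2 barr ba by auto
    next
      case (Inv i1)
      have i1: "i1 \<in> arr_of ` set b" "tgt Q i1 = src Q \<alpha>" using Nin Inv k N_def by (metis arr_of.simps(2) image_eqI, simp)
      have ni: "\<not> in_I Q [i1, o2]" using band_pair_notI_inv[OF bb] P(4) Inv P1 N_def by simp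
      show ?thesis
      proof (rule ccontr)
        assume "\<not> ?thesis"
        then have "\<not> in_I Q [i1, \<alpha>]" using i1 by blast
        then show False
          using card1_contra[OF _ SA_facts(5)[OF SA, of i1], of o2 \<alpha>] fin ni i1 o2 barr ba by auto
      qed
    qed
  qed
qed

lemma orient: "is_band Q b \<Longrightarrow> x \<in> arr_of ` set b \<Longrightarrow>
   \<exists>D j. is_band Q D \<and> band_vertices Q D = band_vertices Q b \<and> arr_of ` set D = arr_of ` set b
     \<and> j < length D \<and> D ! j = Dir x"
proof -
  assume bb: "is_band Q b" and x: "x \<in> arr_of ` set b"
  then obtain l where l: "l \<in> set b" "arr_of l = x" by auto
  show ?thesis
  proof (cases l)
    case (Dir y)
    then have "Dir x \<in> set b" using l by simp
    then obtain j where "j < length b" "b ! j = Dir x" by (metis in_set_conv_nth)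
    then show ?thesis using bb by blast
  next
    case (Inv y)
    then have "Dir x \<in> set (inv_walk b)" using l by (force simp: set_inv_walk)
    then obtain j where "j < length (inv_walk b)" "inv_walk b ! j = Dir x" by (metis in_set_conv_nth)
    then show ?thesis using bb band_inv[OF bb] band_vertices_inv[OF bb] by (metis arrs_inv_walk)
  qed
qed

lemma con_gen:
  assumes "wft Q s (H @ Y1 @ D @ Y3 @ T) t" "red (H @ Y1 @ D @ Y3 @ T)"
    "H = map Dir r1 @ H0" "T = T0 @ map Dir r2" "in_I Q r1" "in_I Q r2" "is_band Q D"
  shows "is_DOZE Q (H @ Y1 @ D @ Y3 @ T)"
  unfolding is_DOZE_def
proof (intro conjI)
  show "is_walk Q (H @ Y1 @ D @ Y3 @ T)" using assms(1) by (rule wft_is_walk)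
  show "reduced (H @ Y1 @ D @ Y3 @ T)" using assms(2) by (simp add: reduced_red)
  show "\<exists>\<rho>1 \<omega>1 \<omega>2 \<omega>3 \<rho>2. in_I Q \<rho>1 \<and> in_I Q \<rho>2 \<and> is_band Q \<omega>2 \<and>
        H @ Y1 @ D @ Y3 @ T = map Dir \<rho>1 @ \<omega>1 @ \<omega>2 @ \<omega>3 @ map Dir \<rho>2"
    using assms(3-7) by (intro exI[of _ r1] exI[of _ "H0 @ Y1"] exI[of _ D] exI[of _ "Y3 @ T0"] exI[of _ r2]) simp
qed

lemma in_I_ne: "in_I Q r \<Longrightarrow> r \<noteq> []"
  unfolding in_I_def is_path_def by simp

lemma in_I_pair: "in_I Q [x, y] \<Longrightarrow> x \<in> arrs Q \<and> y \<in> arrs Q \<and> tgt Q x = src Q y"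
  unfolding in_I_def is_path_def by (auto dest: spec[of _ 0])

lemma band_seg:
  assumes bb: "is_band Q D" and k: "k < length D" and j: "j \<le> length D"
  shows "wft Q (lsrc Q (D ! k)) (drop k D @ D @ take j D) (vtx Q (lsrc Q (hd D)) D j)
         \<and> red (drop k D @ D @ take j D)"
proof
  let ?c = "lsrc Q (hd D)"
  have cl: "wft Q ?c D ?c" by (rule band_closed[OF bb])
  have a: "wft Q (lsrc Q (D ! k)) (drop k D) ?c" using wft_nth_split[OF cl k] by simp
  have b: "wft Q ?c (take j D) (vtx Q ?c D j)" using wft_take_drop_vtx[OF cl j] by simp
  show "wft Q (lsrc Q (D ! k)) (drop k D @ D @ take j D) (vtx Q ?c D j)"
    using a b cl by (auto simp: wft_append)
  have "D @ D @ D = take k D @ (drop k D @ D @ take j D) @ drop j D" by simp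
  then show "red (drop k D @ D @ take j D)" using band_red3[OF bb] red_infix by metis
qed

lemma band_loop:
  assumes bb: "is_band Q D" and k: "k < length D"
  shows "wft Q (lsrc Q (D ! k)) (drop k D @ D @ take k D) (lsrc Q (D ! k))
     \<and> red (drop k D @ D @ take k D)
     \<and> red ((drop k D @ D @ take k D) @ (drop k D @ D @ take k D))"
proof -
  have cl: "wft Q (lsrc Q (hd D)) D (lsrc Q (hd D))" by (rule band_closed[OF bb])
  have v: "vtx Q (lsrc Q (hd D)) D k = lsrc Q (D ! k)" using vtx_lsrc[OF cl k] by simp
  have "(drop k D @ D @ take k D) @ (drop k D @ D @ take k D) = drop k D @ D @ D @ D @ take k D"
    by (metis append.assoc append_take_drop_id)
  moreover have "D @ D @ D @ D @ D = take k D @ (drop k D @ D @ D @ D @ take k D) @ drop k D" by simp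
  ultimately have "red ((drop k D @ D @ take k D) @ (drop k D @ D @ take k D))"
    using band_red5[OF bb] red_infix by metis
  then show ?thesis using band_seg[OF bb k, of k] k v by simp
qed

lemma set_seg: "set (drop k D @ D @ take j D) = set D"
  using set_drop_subset set_take_subset by fastforce

lemma con_start:
  assumes bb: "is_band Q D" and j: "j < length D" and Dj: "D ! j = Dir oo" and rel: "in_I Q [\<beta>, oo]"
    and bn: "\<beta> \<notin> arr_of ` set D" and k: "k < length D"
    and T: "wft Q (lsrc Q (D ! k)) T t" "red T" "T \<noteq> []" "arr_of (hd T) \<notin> arr_of ` set D"
    and T0: "T = T0 @ map Dir r2" "in_I Q r2"
  shows "\<exists>w. is_DOZE Q w"
proof -
  let ?Z = "drop j D @ D @ take k D"
  have cl: "wft Q (lsrc Q (hd D)) D (lsrc Q (hd D))" by (rule band_closed[OF bb])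
  have Zs: "wft Q (lsrc Q (D ! j)) ?Z (lsrc Q (D ! k))" "red ?Z"
    using band_seg[OF bb j, of k] k vtx_lsrc[OF cl k] by auto
  have p: "\<beta> \<in> arrs Q" "tgt Q \<beta> = src Q oo" using in_I_pair[OF rel] by auto
  have hZ: "hd ?Z = Dir oo" using j Dj by (simp add: hd_drop_conv_nth)
  have Zne: "?Z \<noteq> []" using j by simp
  have lZ: "arr_of (last ?Z) \<in> arr_of ` set D" using Zne set_seg[of j D k] by (metis last_in_set image_eqI)
  have wf: "wft Q (src Q \<beta>) (Dir \<beta> # ?Z @ T) t"
    using Zs(1) T(1) p Dj by (auto simp: wft_append)
  have rd: "red (Dir \<beta> # ?Z @ T)"
  proof -
    have "red (?Z @ T)" using red_app_arr[OF Zs(2) T(2)] lZ T(4) by metis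
    moreover have "hd (?Z @ T) = Dir oo" using hZ Zne hd_append2[of ?Z T] by argo
    ultimately show ?thesis by (subst red_Cons) simp
  qed
  have eq: "Dir \<beta> # ?Z @ T = [Dir \<beta>, Dir oo] @ drop (Suc j) D @ D @ take k D @ T"
    using j Dj by (simp add: Cons_nth_drop_Suc[symmetric])
  have "is_DOZE Q ([Dir \<beta>, Dir oo] @ drop (Suc j) D @ D @ take k D @ T)"
    by (rule con_gen[of Q "src Q \<beta>" _ _ _ _ _ t "[\<beta>, oo]" "[]" T0 r2])
       (use wf rd eq T0 rel bb in auto)
  then show ?thesis by blast
qed

lemma con_end:
  assumes bb: "is_band Q D" and j: "j < length D" and Dj: "D ! j = Dir i" and rel: "in_I Q [i, \<alpha>]"
    and k: "k < length D"
    and H: "wft Q s H (lsrc Q (D ! k))" "red H" "H \<noteq> []" "arr_of (last H) \<notin> arr_of ` set D"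
    and H0: "H = map Dir r1 @ H0" "in_I Q r1"
  shows "\<exists>w. is_DOZE Q w"
proof -
  let ?Z = "drop k D @ D @ take (Suc j) D"
  have cl: "wft Q (lsrc Q (hd D)) D (lsrc Q (hd D))" by (rule band_closed[OF bb])
  have Zs: "wft Q (lsrc Q (D ! k)) ?Z (ltgt Q (D ! j))" "red ?Z"
    using band_seg[OF bb k, of "Suc j"] j vtx_Suc[of j D Q "lsrc Q (hd D)"] by auto
  have p: "\<alpha> \<in> arrs Q" "tgt Q i = src Q \<alpha>" using in_I_pair[OF rel] by auto
  have tk: "take (Suc j) D = take j D @ [Dir i]" using j Dj by (simp add: take_Suc_conv_app_nth)
  have lZ: "last ?Z = Dir i" using tk by simp
  have hZ: "hd ?Z = D ! k" using k by (simp add: hd_drop_conv_nth)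
  have wf: "wft Q s (H @ ?Z @ [Dir \<alpha>]) (tgt Q \<alpha>)"
    using H(1) Zs(1) p Dj by (auto simp: wft_append)
  have rd: "red (H @ ?Z @ [Dir \<alpha>])"
  proof -
    have r1: "red (?Z @ [Dir \<alpha>])" by (rule iffD2[OF red_append]) (use Zs(2) lZ in simp)
    have "arr_of (hd (?Z @ [Dir \<alpha>])) \<in> arr_of ` set D" using hZ k by simp
    then show ?thesis using red_app_arr[OF H(2) r1] H(4) by metis
  qed
  have eq: "H @ ?Z @ [Dir \<alpha>] = H @ drop k D @ D @ take j D @ ([] @ map Dir [i, \<alpha>])"
    using tk by simp
  have "is_DOZE Q (H @ drop k D @ D @ take j D @ ([] @ map Dir [i, \<alpha>]))"
    by (rule con_gen[of Q s _ _ _ _ _ "tgt Q \<alpha>" r1 H0 "[]" "[i, \<alpha>]"])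
       (use wf rd eq H0 rel bb in auto)
  then show ?thesis by blast
qed

lemma con_mid:
  assumes H: "wft Q s H m" "red H" "H = map Dir r1 @ H0" "in_I Q r1"
    and T: "wft Q m T t" "red T" "T = T0 @ map Dir r2" "in_I Q r2"
    and L: "wft Q m (Y1 @ D @ Y3) m" "red (Y1 @ D @ Y3)" "Y1 @ D @ Y3 \<noteq> []" "is_band Q D"
    and j1: "H \<noteq> [] \<Longrightarrow> hd (Y1 @ D @ Y3) \<noteq> inv_letter (last H)"
    and j2: "T \<noteq> [] \<Longrightarrow> hd T \<noteq> inv_letter (last (Y1 @ D @ Y3))"
  shows "\<exists>w. is_DOZE Q w"
proof -
  have wf: "wft Q s (H @ Y1 @ D @ Y3 @ T) t" using H(1) L(1) T(1) by (auto simp: wft_append)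
  have "red ((Y1 @ D @ Y3) @ T)" using L(2,3) T(2) j2 by (simp add: red_append del: append_assoc)
  then have "red (H @ (Y1 @ D @ Y3) @ T)" using H(2) L(3) j1 by (simp add: red_append del: append_assoc)
  then have rd: "red (H @ Y1 @ D @ Y3 @ T)" by simp
  show ?thesis using con_gen[OF wf rd H(3) T(3) H(4) T(4) L(4)] by blast
qed

lemma conn_walk:
  assumes "connected_quiver Q" "u \<in> verts Q" "v \<in> verts Q"
  shows "\<exists>w. wft Q u w v"
proof -
  let ?R = "\<lambda>x y. \<exists>a \<in> arrs Q. (src Q a = x \<and> tgt Q a = y) \<or> (src Q a = y \<and> tgt Q a = x)"
  have "?R\<^sup>*\<^sup>* u v" using assms unfolding connected_quiver_def by blast
  then show ?thesis
  proof (induction rule: rtranclp_induct)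
    case base then show ?case by (rule exI[of _ "[]"]) simp
  next
    case (step y z)
    then obtain w where w: "wft Q u w y" by blast
    from step(2) obtain a where a: "a \<in> arrs Q" "(src Q a = y \<and> tgt Q a = z) \<or> (src Q a = z \<and> tgt Q a = y)" by blast
    from a(2) show ?case
    proof
      assume "src Q a = y \<and> tgt Q a = z"
      then have "wft Q u (w @ [Dir a]) z" using w a by (auto simp: wft_append)
      then show ?thesis by blast
    next
      assume "src Q a = z \<and> tgt Q a = y"
      then have "wft Q u (w @ [Inv a]) z" using w a by (auto simp: wft_append)
      then show ?thesis by blast
    qed
  qed
qed

lemma shortest_red:
  assumes "wft Q u w v"
  shows "\<exists>w'. wft Q u w' v \<and> red w'"
proof -
  obtain w' where w': "wft Q u w' v" "\<And>y. wft Q u y v \<Longrightarrow> length w' \<le> length y"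
    using ex_has_least_nat[of "\<lambda>x. wft Q u x v" w length] assms by blast
  have "red w'"
  proof (rule ccontr)
    assume "\<not> red w'"
    then obtain xs l ys where e: "w' = xs @ l # inv_letter l # ys" using not_red_split by blast
    then obtain m where m: "wft Q u xs m" "wft Q m (l # inv_letter l # ys) v" using w'(1) by (auto simp: wft_append)
    then have "wft Q m ys v" by auto
    then have "wft Q u (xs @ ys) v" using m(1) by (auto simp: wft_append)
    then have "length w' \<le> length (xs @ ys)" by (rule w'(2))
    then show False using e by simp
  qed
  then show ?thesis using w' by blast
qed

lemma four_letters:
  fixes A B Y1 Y2 :: "'a letter"
  assumes "B \<noteq> inv_letter A" "Y1 \<noteq> inv_letter Y2"
  shows "(Y1 \<noteq> inv_letter A \<and> B \<noteq> inv_letter Y2) \<or> (inv_letter Y2 \<noteq> inv_letter A \<and> B \<noteq> inv_letter (inv_letter Y1))"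
  using assms by (cases A; cases B; cases Y1; cases Y2) auto

lemma walk_arr_ends:
  assumes "wft Q s W t" "arr_of l \<in> arr_of ` set W"
  shows "lsrc Q l \<in> vtx Q s W ` {..length W} \<and> ltgt Q l \<in> vtx Q s W ` {..length W}"
proof -
  obtain r where r: "r < length W" "arr_of (W ! r) = arr_of l" using assms(2) by (metis imageE in_set_conv_nth)
  have e: "{lsrc Q l, ltgt Q l} = {lsrc Q (W ! r), ltgt Q (W ! r)}" using endpoints[of Q l] endpoints[of Q "W ! r"] r by simp
  have "lsrc Q (W ! r) = vtx Q s W r" using vtx_lsrc[OF assms(1) r(1)] .
  moreover have "ltgt Q (W ! r) = vtx Q s W (Suc r)" using vtx_Suc[OF r(1), of Q s] by simp
  ultimately have "{lsrc Q (W ! r), ltgt Q (W ! r)} \<subseteq> vtx Q s W ` {..length W}" using r(1) by auto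
  then show ?thesis using e by (metis insert_subset)
qed

lemma lsrc_vert: "string_algebra Q \<Longrightarrow> arr_of l \<in> arrs Q \<Longrightarrow> lsrc Q l \<in> verts Q"
proof -
  assume SA: "string_algebra Q" and a: "arr_of l \<in> arrs Q"
  show ?thesis using SA_facts(2)[OF SA a] by (cases l) auto
qed

lemma main_doze:
  assumes SA: "string_algebra Q" and CN: "connected_quiver Q" and bb: "is_band Q b"
    and en: "entering_arrow Q b \<beta>" and ex: "exiting_arrow Q b \<alpha>"
    and Ww: "is_walk Q W" and Wr: "red W" and Weq: "W = map Dir r1 @ nu @ map Dir r2"
    and r1: "in_I Q r1" and r2: "in_I Q r2"
  shows "\<exists>w. is_DOZE Q w"
proof -
  define R1 where "R1 = map Dir r1"
  define R2 where "R2 = map Dir r2"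
  define L1 where "L1 = length R1"
  define L2 where "L2 = L1 + length nu"
  define n where "n = length W"
  have R1ne: "R1 \<noteq> []" using in_I_ne[OF r1] R1_def by simp
  have R2ne: "R2 \<noteq> []" using in_I_ne[OF r2] R2_def by simp
  have Wsplit: "W = R1 @ nu @ R2" using Weq R1_def R2_def by simp
  have Wne: "W \<noteq> []" using Wsplit R1ne by simp
  define s where "s = lsrc Q (hd W)"
  define t where "t = ltgt Q (last W)"
  have Wwft: "wft Q s W t" using is_walk_wft[OF Ww Wne] s_def t_def by simp
  have L1pos: "1 \<le> L1" using R1ne L1_def by (cases R1) auto
  have L12: "L1 \<le> L2" using L2_def by simp
  have L2n: "L2 < n" using R2ne L1_def L2_def n_def Wsplit by (cases R2) auto
  define vW where "vW = vtx Q s W"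
  define VW where "VW = vW ` {..n}"
  define VB where "VB = band_vertices Q b"
  define AB where "AB = arr_of ` set b"
  define AW where "AW = arr_of ` set W"
  obtain oo where oo: "oo \<in> AB" "in_I Q [\<beta>, oo]" using port_in[OF SA bb en] AB_def by blast
  obtain D1 j1 where D1: "is_band Q D1" "band_vertices Q D1 = VB" "arr_of ` set D1 = AB"
      "j1 < length D1" "D1 ! j1 = Dir oo"
    using orient[OF bb oo(1)[unfolded AB_def]] VB_def AB_def by blast
  obtain ii where ii: "ii \<in> AB" "in_I Q [ii, \<alpha>]" using port_out[OF SA bb ex] AB_def by blast
  obtain D2 j2 where D2: "is_band Q D2" "band_vertices Q D2 = VB" "arr_of ` set D2 = AB"
      "j2 < length D2" "D2 ! j2 = Dir ii"
    using orient[OF bb ii(1)[unfolded AB_def]] VB_def AB_def by blast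
  have bnot: "\<beta> \<notin> arr_of ` set D1" using en D1(3) AB_def unfolding entering_arrow_def by simp
  have split: "wft Q s (take p W) (vW p) \<and> wft Q (vW p) (drop p W) t" if "p \<le> n" for p
    using wft_take_drop_vtx[OF Wwft, of p] that vW_def n_def by simp
  have redtd: "red (take p W) \<and> red (drop p W)" for p
    using Wr red_append[of "take p W" "drop p W"] by simp
  have jW: "take p W \<noteq> [] \<Longrightarrow> drop p W \<noteq> [] \<Longrightarrow> hd (drop p W) \<noteq> inv_letter (last (take p W))" for p
    using Wr red_append[of "take p W" "drop p W"] by simp
  have Hform: "take p W = R1 @ take (p - L1) (nu @ R2)" if "L1 \<le> p" for p
    using that Wsplit L1_def by simp
  have Tform: "drop p W = drop p (R1 @ nu) @ R2" if "p \<le> L2" for p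
    using that Wsplit L1_def L2_def by simp
  have bandk: "\<exists>k < length D. lsrc Q (D ! k) = c" if "band_vertices Q D = VB" "c \<in> VB" for D c
    using that unfolding band_vertices_def by (metis imageE in_set_conv_nth)
  have inW: "p < n \<Longrightarrow> arr_of (W ! p) \<in> AW" for p using AW_def n_def by simp
  have lastH: "last (take p W) = W ! (p - 1)" if "1 \<le> p" "p \<le> n" for p
  proof -
    have "take p W = take (p - 1) W @ [W ! (p - 1)]" using that n_def
      by (metis Suc_diff_1 Suc_le_lessD le_less_trans less_numeral_extra(1) take_Suc_conv_app_nth le_eq_less_or_eq)
    then show ?thesis by (metis last_snoc)
  qed
  have hdT: "hd (drop p W) = W ! p" if "p < n" for p using that n_def by (simp add: hd_drop_conv_nth)
  show ?thesis
  proof (cases "\<exists>p \<le> n. vW p \<in> VB")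
    case shared: True
    show ?thesis
    proof (cases "\<exists>p. L1 \<le> p \<and> p \<le> L2 \<and> vW p \<in> VB")
      case True
      then obtain p where p: "L1 \<le> p" "p \<le> L2" "vW p \<in> VB" by blast
      have pn: "p \<le> n" "p < n" using p L2n by auto
      define H where "H = take p W"
      define T where "T = drop p W"
      have Hw: "wft Q s H (vW p)" and Tw: "wft Q (vW p) T t" using split[OF pn(1)] H_def T_def by auto
      have Hr: "red H" and Tr: "red T" using redtd H_def T_def by auto
      have Hne: "H \<noteq> []" using H_def p(1) L1pos Wne by simp
      have Tne: "T \<noteq> []" using T_def pn n_def by simp
      have jHT: "hd T \<noteq> inv_letter (last H)" using jW Hne Tne H_def T_def by blast
      have H0: "H = map Dir r1 @ take (p - L1) (nu @ R2)" using Hform[OF p(1)] H_def R1_def by simp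
      have T0: "T = drop p (R1 @ nu) @ map Dir r2" using Tform[OF p(2)] T_def R2_def by simp
      obtain k where k: "k < length b" "lsrc Q (b ! k) = vW p" using bandk[of b "vW p"] p(3) VB_def by blast
      define Y where "Y = drop k b @ b @ take k b"
      have lp: "wft Q (vW p) Y (vW p)" "red Y" "red (Y @ Y)" using band_loop[OF bb k(1)] k(2) Y_def by auto
      have Yne: "Y \<noteq> []" using Y_def k by simp
      have hY: "hd Y \<noteq> inv_letter (last Y)" using lp(3) Yne red_append[of Y Y] by simp
      from four_letters[OF jHT hY] show ?thesis
      proof
        assume c: "hd Y \<noteq> inv_letter (last H) \<and> hd T \<noteq> inv_letter (last Y)"
        show ?thesis
          by (rule con_mid[OF Hw Hr H0 r1 Tw Tr T0 r2, of "drop k b" b "take k b"])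
             (use lp Yne c bb in \<open>simp_all add: Y_def[symmetric]\<close>)
      next
        assume c: "inv_letter (last Y) \<noteq> inv_letter (last H) \<and> hd T \<noteq> inv_letter (inv_letter (hd Y))"
        have e: "inv_walk (take k b) @ inv_walk b @ inv_walk (drop k b) = inv_walk Y" using Y_def by simp
        have w2: "wft Q (vW p) (inv_walk Y) (vW p)" using wft_inv[OF lp(1)] .
        have r2': "red (inv_walk Y)" using lp(2) red_inv by blast
        have h2: "hd (inv_walk Y) = inv_letter (last Y)" "last (inv_walk Y) = inv_letter (hd Y)"
          using Yne by (simp_all add: hd_inv_walk last_inv_walk)
        have ne2: "inv_walk Y \<noteq> []" using Yne by simp
        show ?thesis
          by (rule con_mid[OF Hw Hr H0 r1 Tw Tr T0 r2, of "inv_walk (take k b)" "inv_walk b" "inv_walk (drop k b)"])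
             (use w2 r2' h2 ne2 c band_inv[OF bb] in \<open>simp_all only: e not_False_eq_True\<close>)
      qed
    next
      case nomid: False
      show ?thesis
      proof (cases "\<exists>p < L1. vW p \<in> VB")
        case True
        define P where "P = {p. p < L1 \<and> vW p \<in> VB}"
        have Pf: "finite P" using P_def by simp
        have Pne: "P \<noteq> {}" using True P_def by blast
        define p0 where "p0 = Max P"
        have p0: "p0 < L1" "vW p0 \<in> VB" using Max_in[OF Pf Pne] p0_def P_def by auto
        have p0max: "\<And>q. q < L1 \<Longrightarrow> vW q \<in> VB \<Longrightarrow> q \<le> p0" using Max_ge[OF Pf] p0_def P_def by blast
        have p0n: "p0 < n" using p0 L12 L2n by simp
        have nb: "arr_of (W ! p0) \<notin> AB"
        proof
          assume "arr_of (W ! p0) \<in> AB"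
          then have "ltgt Q (W ! p0) \<in> VB" using band_arr_ends[OF bb] AB_def VB_def by blast
          moreover have "ltgt Q (W ! p0) = vW (Suc p0)" using vtx_Suc[of p0 W Q s] p0n n_def vW_def by simp
          ultimately have v: "vW (Suc p0) \<in> VB" by simp
          show False
          proof (cases "Suc p0 < L1")
            case True then show False using p0max[OF True v] by simp
          next
            case False then have "Suc p0 = L1" using p0 by simp
            then show False using nomid v L12 by blast
          qed
        qed
        obtain k where k: "k < length D1" "lsrc Q (D1 ! k) = vW p0" using bandk[OF D1(2) p0(2)] by blast
        have T: "wft Q (lsrc Q (D1 ! k)) (drop p0 W) t" using split[of p0] p0n k(2) by simp
        have Tr: "red (drop p0 W)" using redtd by blast
        have Tne: "drop p0 W \<noteq> []" using p0n n_def by simp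
        have hT: "arr_of (hd (drop p0 W)) \<notin> arr_of ` set D1" using hdT[OF p0n] nb D1(3) by simp
        have T0: "drop p0 W = drop p0 (R1 @ nu) @ map Dir r2" using Tform[of p0] p0 L12 R2_def by simp
        show ?thesis by (rule con_start[OF D1(1) D1(4) D1(5) oo(2) bnot k(1) T Tr Tne hT T0 r2])
      next
        case nostart: False
        obtain pp where pp: "pp \<le> n" "vW pp \<in> VB" using shared by blast
        define Pe where "Pe = (\<lambda>p. p \<le> n \<and> vW p \<in> VB)"
        define p0 where "p0 = (LEAST p. Pe p)"
        have p0: "p0 \<le> n" "vW p0 \<in> VB" using LeastI[of Pe pp] pp Pe_def p0_def by auto
        have p0min: "\<And>q. q < p0 \<Longrightarrow> \<not> Pe q" using not_less_Least p0_def by blast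
        have p0g: "L2 < p0"
        proof (rule ccontr)
          assume "\<not> L2 < p0"
          then show False using p0 nomid nostart by (cases "p0 < L1") auto
        qed
        define q where "q = p0 - 1"
        have q: "Suc q = p0" "L2 \<le> q" "q < n" using p0g p0 q_def by auto
        have nb: "arr_of (W ! q) \<notin> AB"
        proof
          assume "arr_of (W ! q) \<in> AB"
          then have "lsrc Q (W ! q) \<in> VB" using band_arr_ends[OF bb] AB_def VB_def by blast
          moreover have "lsrc Q (W ! q) = vW q" using vtx_lsrc[OF Wwft, of q] q n_def vW_def by simp
          ultimately have v: "vW q \<in> VB" by simp
          show False
          proof (cases "q = L2")
            case True then show False using nomid v L12 by blast
          next
            case False then show False using p0min[of q] q v Pe_def by auto
          qed
        qed
        obtain k where k: "k < length D2" "lsrc Q (D2 ! k) = vW p0" using bandk[OF D2(2) p0(2)] by blast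
        have H: "wft Q s (take p0 W) (lsrc Q (D2 ! k))" using split[OF p0(1)] k(2) by simp
        have Hr: "red (take p0 W)" using redtd by blast
        have Hne: "take p0 W \<noteq> []" using q Wne by auto
        have pq: "p0 - 1 = q" using q(1) by simp
        have lH: "last (take p0 W) = W ! q" using lastH[of p0] p0(1) q(1) pq by simp
        have lHa: "arr_of (last (take p0 W)) \<notin> arr_of ` set D2" using lH nb D2(3) by simp
        have H0: "take p0 W = map Dir r1 @ take (p0 - L1) (nu @ R2)" using Hform[of p0] p0g L12 R1_def by simp
        show ?thesis by (rule con_end[OF D2(1) D2(4) D2(5) ii(2) k(1) H Hr Hne lHa H0 r1])
      qed
    qed
  next
    case False
    then have sep: "\<And>p. p \<le> n \<Longrightarrow> vW p \<notin> VB" by blast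
    have r1ne: "r1 \<noteq> []" using in_I_ne[OF r1] .
    have hdW: "hd W = Dir (hd r1)" using Weq r1ne by (cases r1) auto
    have hr1: "hd r1 \<in> arrs Q" using r1 r1ne unfolding in_I_def is_path_def by auto
    have sV: "s \<in> verts Q" using lsrc_vert[OF SA, of "hd W"] hdW hr1 s_def by simp
    define v where "v = lsrc Q (hd b)"
    have bne: "b \<noteq> []" using bb unfolding is_band_def by simp
    have hb: "hd b \<in> set b" using bne by simp
    have vV: "v \<in> verts Q" using lsrc_vert[OF SA, of "hd b"] band_arrs[OF bb] hb v_def by auto
    have vB: "v \<in> VB" using hb unfolding v_def VB_def band_vertices_def by simp
    obtain S0 where S0: "wft Q s S0 v" using conn_walk[OF CN sV vV] by (elim exE)
    obtain S where S: "wft Q s S v" "red S" using shortest_red[OF S0] by (elim exE conjE)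
    define vS where "vS = vtx Q s S"
    define Pj where "Pj = (\<lambda>q. q \<le> length S \<and> vS q \<in> VB)"
    have PjS: "Pj (length S)" using vtx_len[OF S(1)] vB Pj_def vS_def by simp
    define j where "j = (LEAST q. Pj q)"
    have j: "j \<le> length S" "vS j \<in> VB" using LeastI[of Pj, OF PjS] j_def Pj_def by auto
    have jmin: "\<And>q. q < j \<Longrightarrow> \<not> Pj q" using not_less_Least j_def by blast
    define Pi where "Pi = {q. q \<le> j \<and> vS q \<in> VW}"
    have Pif: "finite Pi" using Pi_def by simp
    have Pi0: "0 \<in> Pi" using Pi_def vS_def VW_def vW_def by force
    define i where "i = Max Pi"
    have iPi: "i \<in> Pi" using Max_in[OF Pif] Pi0 i_def by blast
    have i: "i \<le> j" "vS i \<in> VW" using iPi unfolding Pi_def by auto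
    have imax: "\<And>q. q \<le> j \<Longrightarrow> vS q \<in> VW \<Longrightarrow> q \<le> i" using Max_ge[OF Pif] i_def Pi_def by blast
    have ij: "i < j"
    proof -
      have "vS j \<notin> VW" using j(2) sep VW_def by auto
      then show ?thesis using i by (cases "i = j") auto
    qed
    define S' where "S' = take (j - i) (drop i S)"
    have dS: "wft Q (vS i) (drop i S) v" using wft_take_drop_vtx[OF S(1), of i] i j vS_def by simp
    have Sw: "wft Q (vS i) S' (vS j)"
    proof -
      have "j - i \<le> length (drop i S)" using j by simp
      from wft_take_drop_vtx[OF dS this] have "wft Q (vS i) S' (vtx Q (vS i) (drop i S) (j - i))" using S'_def by simp
      moreover have "vtx Q (vS i) (drop i S) (j - i) = vS j" using vtx_drop[of i S Q s "j - i"] i j ij vS_def by simp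
      ultimately show ?thesis by simp
    qed
    have Sr: "red S'"
    proof -
      have "red (drop i S)" using S(2) red_append[of "take i S" "drop i S"] by simp
      moreover have "drop i S = S' @ drop (j - i) (drop i S)" unfolding S'_def by (rule append_take_drop_id[symmetric])
      ultimately show ?thesis using red_append[of S' "drop (j - i) (drop i S)"] by metis
    qed
    have Sne: "S' \<noteq> []" using S'_def ij j by simp
    have Sarr: "arr_of l \<notin> AB \<and> arr_of l \<notin> AW" if "l \<in> set S'" for l
    proof -
      from that obtain q where q: "q < length S'" "S' ! q = l" unfolding in_set_conv_nth by blast
      have lenS': "length S' = j - i" unfolding S'_def using j(1) by simp
      have ql: "i + q < j" using q(1) lenS' by linarith
      have lS: "l = S ! (i + q)" using q(2) q(1) lenS' i(1) j(1) unfolding S'_def by simp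
      have iq: "i + q < length S" using ql j(1) by linarith
      have ls: "lsrc Q l = vS (i + q)" using vtx_lsrc[OF S(1) iq] lS vS_def by simp
      have lt: "ltgt Q l = vS (Suc (i + q))" using vtx_Suc[OF iq, of Q s] lS vS_def by simp
      have "arr_of l \<notin> AB"
      proof
        assume "arr_of l \<in> AB"
        then have "lsrc Q l \<in> VB" using band_arr_ends[OF bb, of l] unfolding AB_def VB_def by blast
        then have "Pj (i + q)" unfolding Pj_def using ls iq by simp
        then show False using jmin[OF ql] by blast
      qed
      moreover have "arr_of l \<notin> AW"
      proof
        assume "arr_of l \<in> AW"
        then have "ltgt Q l \<in> VW" using walk_arr_ends[OF Wwft, of l] unfolding AW_def VW_def vW_def n_def by blast
        then have "vS (Suc (i + q)) \<in> VW" using lt by simp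
        moreover have "Suc (i + q) \<le> j" using ql by simp
        ultimately have "Suc (i + q) \<le> i" using imax by blast
        then show False by simp
      qed
      ultimately show ?thesis by blast
    qed
    obtain p where p: "p \<le> n" "vW p = vS i" using i(2) VW_def by auto
    have cB: "vS j \<in> VB" by (rule j(2))
    have lastSA: "arr_of (last S') \<notin> AB" "arr_of (last S') \<notin> AW" using Sarr[of "last S'"] Sne by auto
    have hdSA: "arr_of (hd S') \<notin> AB" "arr_of (hd S') \<notin> AW" using Sarr[of "hd S'"] Sne by auto
    have Swp: "wft Q (vW p) S' (vS j)" using Sw p by simp
    show ?thesis
    proof (cases "p < L1")
      case True
      obtain k where k: "k < length D1" "lsrc Q (D1 ! k) = vS j" using bandk[OF D1(2) cB] by blast
      define T where "T = inv_walk S' @ drop p W"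
      have pn: "p < n" using True L12 L2n by simp
      have Tw: "wft Q (lsrc Q (D1 ! k)) T t" using wft_inv[OF Swp] split[OF p(1)] k(2) T_def by (auto simp: wft_append)
      have Tr: "red T" unfolding T_def
        by (rule red_app_arr) (use Sr red_inv redtd hdT[OF pn] last_inv_walk[OF Sne] hdSA inW[OF pn] in auto)
      have Tne: "T \<noteq> []" using T_def Sne by simp
      have hT: "arr_of (hd T) \<notin> arr_of ` set D1" using T_def Sne hd_inv_walk[OF Sne] lastSA D1(3) by simp
      have T0: "T = (inv_walk S' @ drop p (R1 @ nu)) @ map Dir r2" using T_def Tform[of p] True L12 R2_def by simp
      show ?thesis by (rule con_start[OF D1(1) D1(4) D1(5) oo(2) bnot k(1) Tw Tr Tne hT T0 r2])
    next
      case nots: False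
      show ?thesis
      proof (cases "p \<le> L2")
        case True
        have pn: "p < n" using True L2n by simp
        have pL1: "L1 \<le> p" using nots by simp
        define H where "H = take p W"
        define T where "T = drop p W"
        have Hw: "wft Q s H (vW p)" and Tw: "wft Q (vW p) T t" using split[OF p(1)] H_def T_def by auto
        have Hr: "red H" and Tr: "red T" using redtd H_def T_def by auto
        have Hne: "H \<noteq> []" using H_def pL1 L1pos Wne by simp
        have Tne: "T \<noteq> []" using T_def pn n_def by simp
        have H0: "H = map Dir r1 @ take (p - L1) (nu @ R2)" using Hform[OF pL1] H_def R1_def by simp
        have T0: "T = drop p (R1 @ nu) @ map Dir r2" using Tform[OF True] T_def R2_def by simp
        have lHW: "arr_of (last H) \<in> AW" using H_def lastH[of p] pL1 L1pos p(1) inW[of "p - 1"] by simp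
        have hTW: "arr_of (hd T) \<in> AW" using T_def hdT[OF pn] inW[OF pn] by simp
        obtain k where k: "k < length b" "lsrc Q (b ! k) = vS j" using bandk[of b "vS j"] cB VB_def by blast
        define Y where "Y = drop k b @ b @ take k b"
        have lp: "wft Q (vS j) Y (vS j)" "red Y" using band_loop[OF bb k(1)] k(2) Y_def by auto
        have Yne: "Y \<noteq> []" using Y_def k by simp
        have hYb: "arr_of (hd Y) \<in> AB" using Y_def k AB_def by (simp add: hd_drop_conv_nth)
        have lYb: "arr_of (last Y) \<in> AB" using Yne set_seg[of k b k] Y_def AB_def by (metis last_in_set image_eqI)
        define Lp where "Lp = S' @ Y @ inv_walk S'"
        have eqL: "(S' @ drop k b) @ b @ take k b @ inv_walk S' = Lp" using Lp_def Y_def by simp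
        have Lw: "wft Q (vW p) Lp (vW p)" using Swp lp(1) wft_inv[OF Swp] Lp_def by (auto simp: wft_append)
        have r1': "red (Y @ inv_walk S')"
          by (rule red_app_arr) (use lp(2) Sr red_inv last_inv_walk hd_inv_walk[OF Sne] lYb lastSA in auto)
        have Lr: "red Lp" unfolding Lp_def
          by (rule red_app_arr) (use Sr r1' Yne hYb lastSA in auto)
        have Lne: "Lp \<noteq> []" using Lp_def Sne by simp
        have hL: "hd Lp = hd S'" using Lp_def Sne by simp
        have lL: "last Lp = inv_letter (hd S')" using Lp_def Sne last_inv_walk[OF Sne] by simp
        have j1: "hd Lp \<noteq> inv_letter (last H)" using hL hdSA(2) lHW by (metis arr_inv)
        have j2: "hd T \<noteq> inv_letter (last Lp)" using lL hdSA(2) hTW by (metis arr_inv inv_inv)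
        show ?thesis
          by (rule con_mid[OF Hw Hr H0 r1 Tw Tr T0 r2, of "S' @ drop k b" b "take k b @ inv_walk S'"])
             (use Lw Lr Lne j1 j2 bb in \<open>simp_all only: eqL not_False_eq_True\<close>)
      next
        case False
        have pL2: "L2 < p" using False by simp
        have p1: "1 \<le> p" using pL2 L12 L1pos by simp
        obtain k where k: "k < length D2" "lsrc Q (D2 ! k) = vS j" using bandk[OF D2(2) cB] by blast
        define H where "H = take p W @ S'"
        have Hw: "wft Q s H (lsrc Q (D2 ! k))" using split[OF p(1)] Swp k(2) H_def by (auto simp: wft_append)
        have lW: "arr_of (last (take p W)) \<in> AW" using lastH[OF p1 p(1)] inW[of "p - 1"] p1 p(1) by simp
        have Hr: "red H" unfolding H_def
          by (rule red_app_arr) (use redtd Sr lW hdSA in auto)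
        have Hne: "H \<noteq> []" using H_def Sne by simp
        have lHa: "arr_of (last H) \<notin> arr_of ` set D2" using H_def Sne lastSA D2(3) by simp
        have H0: "H = map Dir r1 @ (take (p - L1) (nu @ R2) @ S')" using H_def Hform[of p] pL2 L12 R1_def by simp
        show ?thesis by (rule con_end[OF D2(1) D2(4) D2(5) ii(2) k(1) Hw Hr Hne lHa H0 r1])
      qed
    qed
  qed
qed

theorem proposition2p2:
  fixes Q :: "('v, 'a) bquiver" and b :: "'a letter list" and \<alpha> \<beta> :: 'a
  assumes "string_algebra Q"
    and "connected_quiver Q"
    and "\<not> (\<exists>w. is_DOZE Q w)"
    and "is_band Q b"
    and "entering_arrow Q b \<beta>"
    and "exiting_arrow Q b \<alpha>"
  shows "\<not> (\<exists>w. is_double_zero Q w)"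
proof
  assume "\<exists>w. is_double_zero Q w"
  then obtain w r1 nu r2 where w: "is_walk Q w" "reduced w" "in_I Q r1" "in_I Q r2"
      "w = map Dir r1 @ nu @ map Dir r2"
    unfolding is_double_zero_def by blast
  have "\<exists>w. is_DOZE Q w"
    by (rule main_doze[OF assms(1,2,4,5,6) w(1) _ w(5) w(3) w(4)]) (use w(2) reduced_red in blast)
  with assms(3) show False by blast
qed

end
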